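(* Let $\alpha,\beta$ be relatively prime positive integers. For all positive integers $n$ with $s(n)>2$, $$\tfrac12\log_\gamma(n)-1\le s(n)\le\log_\gamma(n)+2.$$ Moreover, for $\alpha=\beta=1$ and all $n$ with $s^{1,1}(n)>2$, we have $s^{1,1}(n)\ge\frac12\log_\varphi(n)+2$, where $\varphi=\frac{1+\sqrt5}{2}$ is the golden ratio.
   Context: For relatively prime positive integers $\alpha,\beta$ and positive integers $a_1,a_2$, the $(\alpha,\beta)$-walk $w_k(a_1,a_2)$ is given by $w_1=a_1$, $w_2=a_2$, $w_{k+2}=\alpha w_{k+1}+\beta w_k$ ($k\ge1$). For a positive integer $n$, $s(n;a_1,a_2)$ is the (largest) index $s$ with $w_s(a_1,a_2)=n$ ($-\infty$ if none), and $s(n)=s^{\alpha,\beta}(n)=\max_{a_1,a_2\ge1}s(n;a_1,a_2)$. $\gamma=\frac12(\alpha+\sqrt{\alpha^2+4\beta})$. *)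

theory Defs
  imports Complex_Main
begin

text \<open>The (alpha,beta)-walk, 1-indexed: walk al be a1 a2 1 = a1, walk al be a1 a2 2 = a2,
  w(k+2) = al * w(k+1) + be * w(k).  Index 0 is a dummy value and never used.\<close>
fun walk :: "nat \<Rightarrow> nat \<Rightarrow> nat \<Rightarrow> nat \<Rightarrow> nat \<Rightarrow> nat" where
  "walk al be a1 a2 0 = 0"
| "walk al be a1 a2 (Suc 0) = a1"
| "walk al be a1 a2 (Suc (Suc 0)) = a2"
| "walk al be a1 a2 (Suc (Suc (Suc k))) =
     al * walk al be a1 a2 (Suc (Suc k)) + be * walk al be a1 a2 (Suc k)"

definition sidx :: "nat \<Rightarrow> nat \<Rightarrow> nat \<Rightarrow> nat" where
  "sidx al be n = Max {k. k \<ge> 1 \<and> (\<exists>a1 a2. a1 \<ge> 1 \<and> a2 \<ge> 1 \<and> walk al be a1 a2 k = n)}"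

definition gam :: "nat \<Rightarrow> nat \<Rightarrow> real" where
  "gam al be = (real al + sqrt (real al ^ 2 + 4 * real be)) / 2"

end

theory Submission imports Defs "HOL-Number_Theory.Cong" begin

lemma walk_lin: "walk al be a1 a2 k = a1 * walk al be 1 0 k + a2 * walk al be 0 1 k"
  by (induction al be a1 a2 k rule: walk.induct) (auto simp: algebra_simps)

lemma walk10: "walk al be 1 0 (Suc (Suc k)) = be * walk al be 0 1 (Suc k)"
proof (induction k rule: less_induct)
  case (less k)
  show ?case
  proof (cases k)
    case 0 then show ?thesis by simp
  next
    case (Suc j)
    show ?thesis
    proof (cases j)
      case 0 then show ?thesis using Suc by simp
    next
      case (Suc i)
      then show ?thesis using \<open>k = Suc j\<close> less[of j] less[of i] by (simp add: algebra_simps)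
    qed
  qed
qed

lemma coprime_step: "coprime (x::nat) (a * x + b * y) \<longleftrightarrow> coprime x (b * y)"
  by (metis coprime_iff_gcd_eq_1 gcd_add_mult add.commute mult.commute)

lemma coprime_be_W:
  assumes "coprime al be"
  shows "coprime be (walk al be 0 1 (Suc (Suc k)))"
proof (induction k)
  case 0 then show ?case by simp
next
  case (Suc k)
  have e: "walk al be 0 1 (Suc (Suc (Suc k))) = walk al be 0 1 (Suc k) * be + al * walk al be 0 1 (Suc (Suc k))" by simp
  show ?case unfolding e coprime_step coprime_mult_right_iff using Suc assms
    by (simp add: coprime_commute)
qed

lemma coprime_W:
  assumes "coprime al be"
  shows "coprime (walk al be 0 1 (Suc k)) (walk al be 0 1 (Suc (Suc k)))"
proof (induction k)
  case 0 then show ?case by simp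
next
  case (Suc k)
  have e: "walk al be 0 1 (Suc (Suc (Suc k))) = al * walk al be 0 1 (Suc (Suc k)) + be * walk al be 0 1 (Suc k)"
    by simp
  have "coprime (walk al be 0 1 (Suc (Suc k))) be"
    using coprime_be_W[OF assms, of k] by (simp add: coprime_commute)
  moreover have "coprime (walk al be 0 1 (Suc (Suc k))) (walk al be 0 1 (Suc k))"
    using Suc by (simp add: coprime_commute)
  ultimately show ?case unfolding e coprime_step by simp
qed

lemma rep:
  fixes A B n :: nat
  assumes "A > 0" "B > 0" "coprime A B" "n > A * B"
  shows "\<exists>x y. x \<ge> 1 \<and> y \<ge> 1 \<and> A * x + B * y = n"
proof -
  obtain u where u: "[A * u = Suc 0] (mod B)" using cong_solve_coprime_nat assms(3) by blast
  define x0 where "x0 = (u * n) mod B"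
  define x where "x = (if x0 = 0 then B else x0)"
  have x1: "x \<ge> 1" "x \<le> B" using assms(2) by (auto simp: x_def x0_def)
  have "[x = u * n] (mod B)" unfolding x_def x0_def cong_def by auto
  then have "[A * x = A * u * n] (mod B)" by (metis cong_scalar_left mult.assoc)
  moreover have "[A * u * n = n] (mod B)" using cong_scalar_right[OF u, of n] by simp
  ultimately have c: "[A * x = n] (mod B)" using cong_trans by blast
  have le: "A * x < n" using x1 assms(4) by (meson le_less_trans mult_le_mono2)
  have "B dvd (n - A * x)" using c le
    by (metis cong_def less_or_eq_imp_le mod_eq_dvd_iff_nat)
  then obtain y where y: "n - A * x = B * y" by blast
  have "y \<ge> 1" using y le by (cases y) auto
  then show ?thesis using y le x1 by (intro exI[of _ x] exI[of _ y]) auto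
qed

lemma walk_ge:
  assumes "al > 0" "be > 0" "a1 \<ge> 1" "a2 \<ge> 1"
  shows "walk al be a1 a2 (Suc k) \<ge> 1 \<and> walk al be a1 a2 (Suc k) \<ge> k"
proof (induction k rule: less_induct)
  case (less k)
  show ?case
  proof (cases k)
    case 0 then show ?thesis using assms by simp
  next
    case (Suc j)
    show ?thesis
    proof (cases j)
      case 0 then show ?thesis using Suc assms by simp
    next
      case (Suc i)
      have "walk al be a1 a2 (Suc k) = al * walk al be a1 a2 (Suc j) + be * walk al be a1 a2 (Suc i)"
        using Suc \<open>k = Suc j\<close> by simp
      moreover have "al * walk al be a1 a2 (Suc j) \<ge> walk al be a1 a2 (Suc j)" using assms by simp
      moreover have "be * walk al be a1 a2 (Suc i) \<ge> walk al be a1 a2 (Suc i)" using assms by simp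
      ultimately show ?thesis using less[of j] less[of i] Suc \<open>k = Suc j\<close> by linarith
    qed
  qed
qed

lemma W_pos:
  assumes "al > 0"
  shows "walk al be 0 1 (Suc (Suc k)) \<ge> 1"
proof (induction k rule: less_induct)
  case (less k)
  show ?case
  proof (cases k)
    case 0 then show ?thesis by simp
  next
    case (Suc j)
    have "walk al be 0 1 (Suc (Suc k)) = al * walk al be 0 1 (Suc (Suc j)) + be * walk al be 0 1 (Suc j)"
      using Suc by simp
    moreover have "al * walk al be 0 1 (Suc (Suc j)) \<ge> 1" using less[of j] Suc assms by simp
    ultimately show ?thesis by linarith
  qed
qed

definition S where "S al be n = {k. k \<ge> 1 \<and> (\<exists>a1 a2. a1 \<ge> 1 \<and> a2 \<ge> 1 \<and> walk al be a1 a2 k = n)}"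

lemma S_fin:
  assumes "al > 0" "be > 0"
  shows "finite (S al be n)"
proof -
  have "S al be n \<subseteq> {..Suc n}"
  proof
    fix k assume "k \<in> S al be n"
    then obtain a1 a2 where h: "k \<ge> 1" "a1 \<ge> 1" "a2 \<ge> 1" "walk al be a1 a2 k = n" unfolding S_def by blast
    then obtain j where "k = Suc j" by (cases k) auto
    then show "k \<in> {..Suc n}" using walk_ge[OF assms h(2,3), of j] h by auto
  qed
  then show ?thesis using finite_subset by blast
qed

lemma S_ne: "n \<ge> 1 \<Longrightarrow> 1 \<in> S al be n"
  unfolding S_def by (auto intro!: exI[of _ n] exI[of _ 1])

lemma sidx_S: "sidx al be n = Max (S al be n)" unfolding sidx_def S_def by simp

lemma sidx_in: assumes "al > 0" "be > 0" "n \<ge> 1" shows "sidx al be n \<in> S al be n"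
  unfolding sidx_S using Max_in[OF S_fin[OF assms(1,2), of n]] S_ne[OF assms(3), of al be] by blast

lemma sidx_ge: assumes "al > 0" "be > 0" "k \<in> S al be n" shows "k \<le> sidx al be n"
  unfolding sidx_S using S_fin[OF assms(1,2)] assms(3) by simp

lemma lower_rep:
  assumes "al > 0" "be > 0" "coprime al be" "n \<ge> 1"
    and "be * walk al be 0 1 (Suc (Suc j)) * walk al be 0 1 (Suc (Suc (Suc j))) < n"
  shows "Suc (Suc (Suc j)) \<le> sidx al be n"
proof -
  let ?A = "walk al be 1 0 (Suc (Suc (Suc j)))"
  let ?B = "walk al be 0 1 (Suc (Suc (Suc j)))"
  have A: "?A = be * walk al be 0 1 (Suc (Suc j))" using walk10[of al be "Suc j"] by simp
  have Ap: "?A > 0" unfolding A using W_pos[OF assms(1), of be j] assms(2) by simp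
  have Bp: "?B > 0" using W_pos[OF assms(1), of be "Suc j"] by linarith
  have cop: "coprime ?A ?B" unfolding A using coprime_be_W[OF assms(3), of "Suc j"] coprime_W[OF assms(3), of "Suc j"]
    by (simp add: coprime_commute)
  obtain x y where xy: "x \<ge> 1" "y \<ge> 1" "?A * x + ?B * y = n"
  proof -
    have "?A * ?B < n" using assms(5) unfolding A by (simp only: mult.assoc)
    then show ?thesis using rep[OF Ap Bp cop] that by blast
  qed
  have "walk al be x y (Suc (Suc (Suc j))) = n" using xy(3) walk_lin[of al be x y "Suc (Suc (Suc j))"] by (simp only: mult.commute)
  moreover have "1 \<le> Suc (Suc (Suc j))" by simp
  ultimately have "Suc (Suc (Suc j)) \<in> S al be n" unfolding S_def using xy(1,2) by blast
  then show ?thesis using sidx_ge assms by blast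
qed

lemma gam_props:
  assumes "al > 0" "be > 0"
  shows "gam al be ^ 2 = al * gam al be + be" "gam al be > 1" "gam al be \<ge> al"
proof -
  define r where "r = sqrt (real al ^ 2 + 4 * real be)"
  have r2: "r ^ 2 = real al ^ 2 + 4 * real be" unfolding r_def by simp
  have rg: "r > al"
    unfolding r_def using assms by (intro real_less_rsqrt) simp
  have g: "gam al be = (al + r) / 2" unfolding gam_def r_def by simp
  show "gam al be ^ 2 = al * gam al be + be" unfolding g using r2
    by (simp add: power2_eq_square field_simps)
  show "gam al be > 1" unfolding g using rg assms by simp
  show "gam al be \<ge> al" unfolding g using rg by simp
qed

lemma walk_lower:
  assumes "al > 0" "be > 0" "a1 \<ge> 1" "a2 \<ge> 1"
  shows "gam al be ^ k \<le> gam al be * real (walk al be a1 a2 (Suc k))"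
proof (induction k rule: less_induct)
  case (less k)
  let ?g = "gam al be"
  note gp = gam_props[OF assms(1,2)]
  show ?case
  proof (cases k)
    case 0
    have "1 \<le> real a1" using assms by simp
    then show ?thesis using 0 gp(2) mult_mono[of 1 "gam al be" 1 "real a1"] by simp
  next
    case (Suc j)
    show ?thesis
    proof (cases j)
      case 0 then show ?thesis using Suc assms gp by simp
    next
      case (Suc i)
      have e: "real (walk al be a1 a2 (Suc k)) = al * real (walk al be a1 a2 (Suc j)) + be * real (walk al be a1 a2 (Suc i))"
        using Suc \<open>k = Suc j\<close> by simp
      have "?g ^ k = ?g ^ i * ?g ^ 2" using Suc \<open>k = Suc j\<close> by (simp add: power_add[symmetric])
      also have "\<dots> = al * ?g ^ j + be * ?g ^ i" unfolding gp(1) using Suc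
        by (simp add: algebra_simps)
      also have "\<dots> \<le> al * (?g * real (walk al be a1 a2 (Suc j))) + be * (?g * real (walk al be a1 a2 (Suc i)))"
        using less[of j] less[of i] Suc \<open>k = Suc j\<close>
        by (intro add_mono mult_left_mono) auto
      also have "\<dots> = ?g * real (walk al be a1 a2 (Suc k))" unfolding e by (simp add: algebra_simps)
      finally show ?thesis .
    qed
  qed
qed

lemma W_upper:
  assumes "al > 0" "be > 0"
  shows "real (walk al be 0 1 (Suc (Suc k))) \<le> gam al be ^ k"
proof (induction k rule: less_induct)
  case (less k)
  let ?g = "gam al be"
  note gp = gam_props[OF assms(1,2)]
  show ?case
  proof (cases k)
    case 0 then show ?thesis by simp
  next
    case (Suc j)
    show ?thesis
    proof (cases j)
      case 0 then show ?thesis using Suc gp by simp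
    next
      case (Suc i)
      have e: "real (walk al be 0 1 (Suc (Suc k))) = al * real (walk al be 0 1 (Suc (Suc j))) + be * real (walk al be 0 1 (Suc (Suc i)))"
        using Suc \<open>k = Suc j\<close> by simp
      have "real (walk al be 0 1 (Suc (Suc k))) \<le> al * ?g ^ j + be * ?g ^ i"
        unfolding e using less[of j] less[of i] Suc \<open>k = Suc j\<close>
        by (intro add_mono mult_left_mono) auto
      also have "\<dots> = ?g ^ i * ?g ^ 2" unfolding gp(1) using Suc
        by (simp add: algebra_simps)
      also have "\<dots> = ?g ^ k" using Suc \<open>k = Suc j\<close> by (simp add: power_add[symmetric])
      finally show ?thesis .
    qed
  qed
qed

lemma gam11: "gam 1 1 = (1 + sqrt 5) / 2" unfolding gam_def by simp

lemma binet:
  defines "\<phi> \<equiv> (1 + sqrt 5) / 2" and "\<psi> \<equiv> (1 - sqrt 5) / 2"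
  shows "real (walk 1 1 0 1 (Suc k)) = (\<phi> ^ k - \<psi> ^ k) / sqrt 5"
proof (induction k rule: less_induct)
  case (less k)
  have p2: "\<phi> ^ 2 = \<phi> + 1" "\<psi> ^ 2 = \<psi> + 1" unfolding \<phi>_def \<psi>_def
    by (simp_all add: power2_eq_square field_simps) 
  show ?case
  proof (cases k)
    case 0 then show ?thesis by simp
  next
    case (Suc j)
    show ?thesis
    proof (cases j)
      case 0 then show ?thesis using Suc unfolding \<phi>_def \<psi>_def by (simp add: field_simps)
    next
      case (Suc i)
      have e: "real (walk 1 1 0 1 (Suc k)) = real (walk 1 1 0 1 (Suc j)) + real (walk 1 1 0 1 (Suc i))"
        using Suc \<open>k = Suc j\<close> by simp
      have "\<phi> ^ k = \<phi> ^ i * \<phi> ^ 2" "\<psi> ^ k = \<psi> ^ i * \<psi> ^ 2" using Suc \<open>k = Suc j\<close>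
        by (simp_all add: power_add[symmetric])
      then show ?thesis unfolding e using less[of j] less[of i] Suc \<open>k = Suc j\<close> p2
        by (simp add: field_simps)
    qed
  qed
qed

lemma fib_prod:
  defines "\<phi> \<equiv> (1 + sqrt 5) / 2"
  shows "5 * (real (walk 1 1 0 1 (Suc m)) * real (walk 1 1 0 1 (Suc (Suc m)))) \<le> \<phi> ^ (2 * m + 1) + 1"
proof -
  define \<psi> where "\<psi> = (1 - sqrt 5) / 2"
  have pp: "\<phi> * \<psi> = -1" "\<phi> + \<psi> = 1" unfolding \<phi>_def \<psi>_def by (simp_all add: field_simps)
  have ps: "\<psi> < 0" unfolding \<psi>_def by (simp add: real_less_rsqrt)
  have "5 * (real (walk 1 1 0 1 (Suc m)) * real (walk 1 1 0 1 (Suc (Suc m))))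
     = (\<phi> ^ m - \<psi> ^ m) * (\<phi> ^ Suc m - \<psi> ^ Suc m)"
  proof -
    have b1: "real (walk 1 1 0 1 (Suc m)) = (\<phi> ^ m - \<psi> ^ m) / sqrt 5"
      using binet[of m] unfolding \<phi>_def \<psi>_def by simp
    have b2: "real (walk 1 1 0 1 (Suc (Suc m))) = (\<phi> ^ Suc m - \<psi> ^ Suc m) / sqrt 5"
      using binet[of "Suc m"] unfolding \<phi>_def \<psi>_def by simp
    show ?thesis unfolding b1 b2 by (simp add: field_simps)
  qed
  also have "\<dots> = \<phi> ^ (2*m+1) - (\<phi> * \<psi>) ^ m * (\<phi> + \<psi>) + \<psi> ^ (2*m+1)"
    by (simp add: algebra_simps power_mult_distrib power_add mult_2 power_mult power2_eq_square)
  also have "\<dots> = \<phi> ^ (2*m+1) - (-1) ^ m + \<psi> ^ (2*m+1)" unfolding pp by simp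
  also have "\<dots> \<le> \<phi> ^ (2*m+1) + 1"
  proof -
    have "\<psi> ^ (2*m+1) = \<psi> * (\<psi>^2)^m" by (simp add: power_mult power_add mult.commute power_mult_distrib flip: power_mult)
    also have "\<dots> \<le> 0" using ps by (intro mult_nonpos_nonneg) auto
    finally have "\<psi> ^ (2*m+1) \<le> 0" .
    moreover have "- ((-1::real) ^ m) \<le> 1" by (cases "even m") auto
    ultimately show ?thesis by linarith
  qed
  finally show ?thesis .
qed

declare walk.simps(4)[simp del]

theorem proposition3p4:
  fixes al be :: nat
  assumes "al > 0" "be > 0" "coprime al be"
  shows "(\<forall>n::nat. n > 0 \<and> sidx al be n > 2 \<longrightarrow>
            log (gam al be) (real n) / 2 - 1 \<le> real (sidx al be n) \<and>
            real (sidx al be n) \<le> log (gam al be) (real n) + 2)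
       \<and> (\<forall>n::nat. n > 0 \<and> sidx 1 1 n > 2 \<longrightarrow>
            real (sidx 1 1 n) \<ge> log ((1 + sqrt 5) / 2) (real n) / 2 + 2)"
proof (intro conjI allI impI)
  fix n :: nat
  assume h: "n > 0 \<and> sidx al be n > 2"
  let ?g = "gam al be"
  let ?s = "sidx al be n"
  note gp = gam_props[OF assms(1,2)]
  have n1: "n \<ge> 1" and np: "real n > 0" using h by auto
  obtain j where sj: "?s = Suc (Suc (Suc j))" using h by (intro that[of "?s - 3"]) linarith
  show "real ?s \<le> log ?g (real n) + 2"
  proof -
    from sidx_in[OF assms(1,2) n1] obtain a1 a2 where a: "a1 \<ge> 1" "a2 \<ge> 1" "walk al be a1 a2 ?s = n"
      unfolding S_def by blast
    have "?g ^ Suc (Suc j) \<le> ?g * real n" using walk_lower[OF assms(1,2) a(1,2), of "Suc (Suc j)"] a(3) sj by simp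
    then have "?g * ?g ^ Suc j \<le> ?g * real n" by simp
    then have "?g ^ Suc j \<le> real n" using gp(2) by simp
    moreover have pw: "?g powr real (Suc j) = ?g ^ Suc j" using gp(2) by (intro powr_realpow) simp
    ultimately have "real (Suc j) \<le> log ?g (real n)" using le_log_iff[OF gp(2) np, of "real (Suc j)"] by simp
    then show ?thesis using sj by simp
  qed
  show "log ?g (real n) / 2 - 1 \<le> real ?s"
  proof (rule ccontr)
    assume "\<not> ?thesis"
    then have lg: "real (2 * j + 5) < log ?g (real n)" using sj by simp
    have pw: "?g powr real (2 * j + 5) = ?g ^ (2 * j + 5)" using gp(2) by (intro powr_realpow) simp
    have gn: "?g ^ (2 * j + 5) < real n" using lg less_log_iff[OF gp(2) np, of "real (2 * j + 5)"] unfolding pw by simp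
    have "real (be * walk al be 0 1 (Suc (Suc (Suc j))) * walk al be 0 1 (Suc (Suc (Suc (Suc j)))))
        = real be * real (walk al be 0 1 (Suc (Suc (Suc j)))) * real (walk al be 0 1 (Suc (Suc (Suc (Suc j)))))"
      by simp
    also have "\<dots> \<le> ?g ^ 2 * ?g ^ Suc j * ?g ^ Suc (Suc j)"
      using W_upper[OF assms(1,2), of "Suc j"] W_upper[OF assms(1,2), of "Suc (Suc j)"] gp
      by (intro mult_mono) auto
    also have "\<dots> = ?g ^ (2 + Suc j + Suc (Suc j))" unfolding power_add by (rule refl)
    also have "2 + Suc j + Suc (Suc j) = 2 * j + 5" by simp
    finally have "be * walk al be 0 1 (Suc (Suc (Suc j))) * walk al be 0 1 (Suc (Suc (Suc (Suc j)))) < n"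
      using gn by linarith
    from lower_rep[OF assms n1 this] sj show False by simp
  qed
next
  fix n :: nat
  assume h: "n > 0 \<and> sidx 1 1 n > 2"
  define \<phi> where "\<phi> = (1 + sqrt 5) / 2"
  let ?s = "sidx 1 1 n"
  have gp: "\<phi> > 1" using gam_props(2)[of 1 1] gam11 unfolding \<phi>_def by simp
  have p2: "\<phi> ^ 2 = \<phi> + 1" unfolding \<phi>_def by (simp add: power2_eq_square field_simps)
  have n1: "n \<ge> 1" and np: "real n > 0" using h by auto
  obtain j where sj: "?s = Suc (Suc (Suc j))" using h by (intro that[of "?s - 3"]) linarith
  show "log ((1 + sqrt 5) / 2) (real n) / 2 + 2 \<le> real ?s"
  proof (rule ccontr)
    assume "\<not> ?thesis"
    then have lg: "real (2 * j + 2) < log \<phi> (real n)" using sj unfolding \<phi>_def by simp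
    have pw: "\<phi> powr real (2 * j + 2) = \<phi> ^ (2 * j + 2)" using gp by (intro powr_realpow) simp
    have gn: "\<phi> ^ (2 * j + 2) < real n" using lg less_log_iff[OF gp np, of "real (2 * j + 2)"] unfolding pw by simp
    have fp: "5 * (real (walk 1 1 0 1 (Suc (Suc (Suc j)))) * real (walk 1 1 0 1 (Suc (Suc (Suc (Suc j))))))
        \<le> \<phi> ^ (2 * (Suc (Suc j)) + 1) + 1" using fib_prod[of "Suc (Suc j)"] unfolding \<phi>_def by simp
    have "\<phi> ^ (2 * (Suc (Suc j)) + 1) = \<phi> ^ 2 * \<phi> * \<phi> ^ (2 * j + 2)" by (simp add: power_add[symmetric])
    also have "\<phi> ^ 2 * \<phi> = 2 + sqrt 5" unfolding p2 unfolding \<phi>_def by (simp add: field_simps)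
    finally have e: "\<phi> ^ (2 * (Suc (Suc j)) + 1) = (2 + sqrt 5) * \<phi> ^ (2 * j + 2)" .
    have "\<phi> ^ 2 \<le> \<phi> ^ (2 * j + 2)" using gp by (intro power_increasing) auto
    moreover have "(3 - sqrt 5) * \<phi> ^ 2 = 2"
    proof -
      have "(3 - sqrt 5) * \<phi> ^ 2 = (3 - sqrt 5) * (\<phi> + 1)" by (simp only: p2)
      also have "\<dots> = 2" unfolding \<phi>_def by (simp add: field_simps)
      finally show ?thesis .
    qed
    moreover have "3 - sqrt 5 > 0" by (simp add: real_less_lsqrt)
    ultimately have "2 \<le> (3 - sqrt 5) * \<phi> ^ (2 * j + 2)" by (metis mult_left_mono less_imp_le)
    then have "5 * (real (walk 1 1 0 1 (Suc (Suc (Suc j)))) * real (walk 1 1 0 1 (Suc (Suc (Suc (Suc j))))))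
        \<le> 5 * \<phi> ^ (2 * j + 2)" using fp e by (simp add: algebra_simps)
    then have "real (1 * walk 1 1 0 1 (Suc (Suc (Suc j))) * walk 1 1 0 1 (Suc (Suc (Suc (Suc j))))) < real n"
      using gn by simp
    then have "1 * walk 1 1 0 1 (Suc (Suc (Suc j))) * walk 1 1 0 1 (Suc (Suc (Suc (Suc j)))) < n"
      by linarith
    from lower_rep[of 1 1, OF _ _ _ n1 this] sj show False by simp
  qed
qed

end
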